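(* Let $P$ be a finite set of points in the Euclidean plane with $|P|$ even, and let $M$ be a $2$-local maximum perfect matching on $P$. Let $M^*$ be a maximum-length perfect matching on $P$. Then $w(M)\geqslant \sqrt{3/7}\, w(M^* )$.
   Context: A perfect matching on a finite point set $P$ in the plane is a partition of $P$ into pairs; each pair $\{a,b\}$ is regarded as the straight-line segment (edge) $ab$. For a set $E$ of segments, $w(E)$ denotes the sum of the Euclidean lengths of its segments. A perfect matching $M$ on $P$ is a maximum-length (globally maximum) matching if $w(M)\geqslant w(M')$ for every perfect matching $M'$ on $P$. For an integer $k$, a perfect matching $M$ is $k$-local maximum if for every subset $M'=\{a_1b_1,\dots,a_kb_k\}$ of $k$ edges of $M$, $M'$ is a maximum-length perfect matching on the point set $\{a_1,b_1,\dots,a_k,b_k\}$. *)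

theory Defs
  imports "HOL-Analysis.Analysis"
begin

type_synonym point = "real^2"

definition seg_len :: "point set \<Rightarrow> real" where
  "seg_len e = (THE d. \<exists>a b. e = {a, b} \<and> d = dist a b)"

definition wt :: "point set set \<Rightarrow> real" where
  "wt E = (\<Sum>e\<in>E. seg_len e)"

definition perfect_matching :: "point set \<Rightarrow> point set set \<Rightarrow> bool" where
  "perfect_matching P M \<longleftrightarrow>
     (\<forall>e\<in>M. \<exists>a b. a \<noteq> b \<and> e = {a, b}) \<and>
     pairwise disjnt M \<and> \<Union>M = P"

definition max_matching :: "point set \<Rightarrow> point set set \<Rightarrow> bool" where
  "max_matching P M \<longleftrightarrow> perfect_matching P M \<and>
     (\<forall>M'. perfect_matching P M' \<longrightarrow> wt M' \<le> wt M)"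

definition local_max_matching :: "nat \<Rightarrow> point set \<Rightarrow> point set set \<Rightarrow> bool" where
  "local_max_matching k P M \<longleftrightarrow> perfect_matching P M \<and>
     (\<forall>M'\<subseteq>M. card M' = k \<longrightarrow> max_matching (\<Union>M') M')"

end

theory Submission
  imports Defs
begin


lemma cont_Max:
  fixes g :: "'i \<Rightarrow> 'a::topological_space \<Rightarrow> real"
  assumes "finite I" "I \<noteq> {}" "\<And>i. i \<in> I \<Longrightarrow> continuous_on S (g i)"
  shows "continuous_on S (\<lambda>x. Max ((\<lambda>i. g i x) ` I))"
  using assms
proof (induction I rule: finite_ne_induct)
  case (singleton i) then show ?case by simp
next
  case (insert i I)
  have "(\<lambda>x. Max ((\<lambda>j. g j x) ` insert i I)) = (\<lambda>x. max (g i x) (Max ((\<lambda>j. g j x) ` I)))"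
    using insert by (auto simp: Max_insert)
  then show ?case using insert by (auto intro!: continuous_on_max)
qed

lemma norm_diff_sq': "norm (x - y)^2 = norm x^2 + norm y^2 - 2 * inner x (y::'a::real_inner)"
  by (simp add: power2_norm_eq_inner inner_diff_left inner_diff_right inner_commute)

lemma norm_add_sq': "norm (x + y)^2 = norm x^2 + norm y^2 + 2 * inner x (y::'a::real_inner)"
  by (simp add: power2_norm_eq_inner inner_add_left inner_add_right inner_commute)

lemma three_disks:
  fixes m :: "'i \<Rightarrow> 'a::euclidean_space" and r :: "'i \<Rightarrow> real"
  assumes I: "finite I" "card I \<le> 3"
    and rpos: "\<And>i. i \<in> I \<Longrightarrow> r i > 0"
    and d: "\<And>i j. i \<in> I \<Longrightarrow> j \<in> I \<Longrightarrow> dist (m i) (m j) \<le> r i + r j"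
  shows "\<exists>z. \<forall>i\<in>I. dist z (m i)^2 \<le> 4/3 * (r i)^2"
proof (cases "I = {}")
  case True then show ?thesis by auto
next
  case False
  define f where "f i x = (dist x (m i))^2 / (r i)^2" for i x
  define F where "F x = Max ((\<lambda>i. f i x) ` I)" for x
  have contf: "continuous_on UNIV (f i)" for i
  proof -
    have "f i = (\<lambda>x. inverse ((r i)^2) * (dist x (m i))^2)"
      by (auto simp: f_def fun_eq_iff divide_inverse mult.commute)
    then show ?thesis by (simp add: continuous_intros)
  qed
  have contF: "continuous_on UNIV F" unfolding F_def using cont_Max[OF I(1) False contf] by simp
  obtain i0 where i0: "i0 \<in> I" using False by auto
  have fle: "f i x \<le> F x" if "i \<in> I" for i x unfolding F_def using I(1) that by auto
  have fnn: "0 \<le> f i x" for i x unfolding f_def by simp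
  define R where "R = r i0 * (F (m i0) + 1)"
  have Fnn: "0 \<le> F x" for x using fle[OF i0, of x] fnn[of i0 x] by linarith
  have R0: "R \<ge> 0" unfolding R_def using rpos[OF i0] Fnn[of "m i0"] by simp
  obtain z where oK: "z \<in> cball (m i0) R" and omin: "\<forall>y\<in>cball (m i0) R. F z \<le> F y"
    using continuous_attains_inf[of "cball (m i0) R" F] contF R0
    by (metis compact_cball cball_eq_empty continuous_on_subset not_less subset_UNIV)
  have gmin: "F z \<le> F y" for y
  proof (cases "y \<in> cball (m i0) R")
    case False
    then have h: "dist (m i0) y > R" by simp
    then have "R^2 < dist y (m i0)^2" using R0 by (simp add: dist_commute power_strict_mono)
    then have "R^2 / (r i0)^2 < f i0 y" unfolding f_def using rpos[OF i0]
      by (simp add: divide_strict_right_mono)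
    moreover have "R^2 / (r i0)^2 = (F (m i0) + 1)^2" unfolding R_def using rpos[OF i0]
      by (simp add: power_mult_distrib)
    moreover have "F (m i0) < (F (m i0) + 1)^2" using Fnn[of "m i0"]
    proof -
      have "(F (m i0) + 1)^2 = F (m i0) * F (m i0) + F (m i0) + (F (m i0) + 1)"
        by (simp add: power2_eq_square algebra_simps)
      moreover have "F (m i0) * F (m i0) \<ge> 0" by simp
      ultimately show ?thesis using Fnn[of "m i0"] by linarith
    qed
    moreover have "F z \<le> F (m i0)" using omin R0 by simp
    ultimately show ?thesis using fle[OF i0, of y] by linarith
  qed (use omin in auto)
  define \<mu> where "\<mu> = F z"
  show ?thesis
  proof (cases "\<mu> \<le> 4/3")
    case True
    show ?thesis
    proof (intro exI ballI)
      fix i assume i: "i \<in> I"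
      have "f i z \<le> 4/3" using fle[OF i, of z] True \<mu>_def by linarith
      then show "dist z (m i)^2 \<le> 4/3 * (r i)^2" unfolding f_def using rpos[OF i]
        by (simp add: divide_le_eq)
    qed
  next
    case False
    hence \<mu>: "\<mu> > 4/3" by simp
    define A where "A = {i\<in>I. f i z = \<mu>}"
    define u where "u i = z - m i" for i
    have AI: "A \<subseteq> I" unfolding A_def by auto
    have nu: "norm (u i)^2 = \<mu> * r i^2" if "i \<in> A" for i
      using that rpos[of i] unfolding A_def f_def u_def by (auto simp: dist_norm field_simps)
    have nu2: "norm (u i) = sqrt \<mu> * r i" if "i \<in> A" for i
    proof -
      have "norm (u i) = sqrt (norm (u i)^2)" by simp
      also have "\<dots> = sqrt \<mu> * r i" using nu[OF that] rpos[of i] that AI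
        by (auto simp: real_sqrt_mult)
      finally show ?thesis .
    qed
    have upos: "norm (u i) > 0" if "i \<in> A" for i
      using nu2[OF that] rpos[of i] that AI \<mu> by auto
    have ang: "inner (u i) (u j) > - (1/2) * norm (u i) * norm (u j)"
      if ij: "i\<in>A" "j\<in>A" for i j
    proof (rule ccontr)
      assume "\<not> ?thesis"
      then have h: "inner (u i) (u j) \<le> - (1/2) * norm (u i) * norm (u j)" by simp
      have ri: "r i > 0" and rj: "r j > 0" using ij AI rpos by auto
      have "dist (m i) (m j)^2 = norm (u i - u j)^2" unfolding u_def
        by (simp add: dist_norm norm_minus_commute)
      also have "\<dots> = norm (u i)^2 + norm (u j)^2 - 2 * inner (u i) (u j)" by (rule norm_diff_sq')
      moreover have "\<dots> \<ge> norm (u i)^2 + norm (u j)^2 + norm (u i) * norm (u j)" using h by linarith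
      moreover have sq: "sqrt \<mu> * (sqrt \<mu> * x) = \<mu> * x" for x
        using \<mu> by (simp add: mult.assoc[symmetric])
      ultimately have h2: "dist (m i) (m j)^2 \<ge> \<mu> * (r i^2 + r j^2 + r i * r j)"
        using sq nu[OF ij(1)] nu[OF ij(2)] nu2[OF ij(1)] nu2[OF ij(2)] \<mu>
        by (simp add: algebra_simps power2_eq_square)
      have "\<mu> * (r i^2 + r j^2 + r i * r j) > 4/3 * (r i^2 + r j^2 + r i * r j)"
        proof (rule mult_strict_right_mono)
        have "0 < r i * r j" using ri rj by simp
        moreover have "0 \<le> r i^2 + r j^2" by simp
        ultimately show "0 < r i^2 + r j^2 + r i * r j" by linarith
      qed (use \<mu> in simp)
      moreover have "4/3 * (r i^2 + r j^2 + r i * r j) \<ge> (r i + r j)^2"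
        proof -
        have "4/3 * (r i^2 + r j^2 + r i * r j) - (r i + r j)^2 = (r i - r j)^2 / 3"
          by (simp add: power2_eq_square algebra_simps)
        moreover have "(r i - r j)^2 / 3 \<ge> 0" by simp
        ultimately show ?thesis by linarith
      qed
      moreover have "(r i + r j)^2 \<ge> dist (m i) (m j)^2"
        using d[of i j] ij AI by (intro power_mono) auto
      ultimately show False using h2 by linarith
    qed
    define v where "v = - (\<Sum>j\<in>A. (1 / norm (u j)) *\<^sub>R u j)"
    have finA: "finite A" using AI I(1) finite_subset by blast
    have vneg: "inner v (u i) < 0" if i: "i \<in> A" for i
    proof -
      define g where "g j = inner (u j) (u i) / norm (u j)" for j
      have "inner v (u i) = - (\<Sum>j\<in>A. g j)" unfolding v_def g_def
        by (simp add: inner_sum_left)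
      also have "(\<Sum>j\<in>A. g j) = g i + (\<Sum>j\<in>A-{i}. g j)" using finA i by (simp add: sum.remove)
      also have "g i = norm (u i)" unfolding g_def using upos[OF i]
        by (simp add: power2_norm_eq_inner[symmetric] power2_eq_square)
      also have "(\<Sum>j\<in>A-{i}. g j) > - norm (u i)"
      proof (cases "A - {i} = {}")
        case True then have "(\<Sum>j\<in>A-{i}. g j) = 0" by (simp only: sum.empty)
        then show ?thesis using upos[OF i] by simp
      next
        case False
        have "(\<Sum>j\<in>A-{i}. g j) > (\<Sum>j\<in>A-{i}. - (1/2) * norm (u i))"
        proof (rule sum_strict_mono)
          fix j assume j: "j \<in> A - {i}"
          have "inner (u j) (u i) > - (1/2) * norm (u j) * norm (u i)" using ang[of j i] j i by auto
          then show "g j > - (1/2) * norm (u i)" unfolding g_def using upos[of j] j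
            by (simp add: field_simps)
        qed (use finA False in auto)
        moreover have "card (A - {i}) \<le> 2"
          using card_mono[OF I(1) AI] I(2) i finA by (simp add: card_Diff_singleton)
        then have "(\<Sum>j\<in>A-{i}. - (1/2) * norm (u i)) \<ge> - norm (u i)"
          using upos[OF i] by (simp add: mult_le_cancel_right)
        ultimately show ?thesis by linarith
      qed
      ultimately show ?thesis by linarith
    qed
    have ev: "\<forall>\<^sub>F t in at_right 0. \<forall>i\<in>I. f i (z + t *\<^sub>R v) < \<mu>"
    proof (rule eventually_ball_finite[OF I(1)], intro ballI)
      fix i assume i: "i \<in> I"
      show "\<forall>\<^sub>F t in at_right 0. f i (z + t *\<^sub>R v) < \<mu>"
      proof (cases "i \<in> A")
        case True
        have eq: "f i (z + t *\<^sub>R v) = \<mu> + t * (2 * inner v (u i) + t * norm v^2) / r i^2" for t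
        proof -
          have "dist (z + t *\<^sub>R v) (m i)^2 = norm (u i + t *\<^sub>R v)^2" unfolding u_def
            by (simp add: dist_norm algebra_simps)
          also have "\<dots> = norm (u i)^2 + t^2 * norm v^2 + 2 * t * inner v (u i)"
            by (simp add: norm_add_sq' inner_commute power_mult_distrib)
          finally show ?thesis unfolding f_def using nu[OF True] rpos[OF i]
            by (simp add: field_simps power2_eq_square)
        qed
        have "((\<lambda>t. 2 * inner v (u i) + t * norm v^2) \<longlongrightarrow> 2 * inner v (u i) + 0 * norm v^2) (at_right 0)"
          by (intro tendsto_intros)
        then have "\<forall>\<^sub>F t in at_right 0. 2 * inner v (u i) + t * norm v^2 < 0"
          using vneg[OF True] by (intro order_tendstoD(2)[of _ "2 * inner v (u i)"]) auto
        with eventually_at_right_less[of "0::real"]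
        show ?thesis
        proof eventually_elim
          case (elim t)
          then have "t * (2 * inner v (u i) + t * norm v^2) / r i^2 < 0"
            using rpos[OF i] by (simp add: divide_neg_pos mult_pos_neg)
          then show ?case using eq by simp
        qed
      next
        case False
        then have lt: "f i z < \<mu>" using fle[OF i, of z] i unfolding A_def \<mu>_def by auto
        have "((\<lambda>t. f i (z + t *\<^sub>R v)) \<longlongrightarrow> f i (z + 0 *\<^sub>R v)) (at_right 0)"
          proof (rule isCont_tendsto_compose[where g="f i"])
          show "isCont (f i) (z + 0 *\<^sub>R v)" using contf[of i]
            by (simp add: continuous_on_eq_continuous_at)
          show "((\<lambda>t. z + t *\<^sub>R v) \<longlongrightarrow> z + 0 *\<^sub>R v) (at_right 0)"
            by (intro tendsto_intros)
        qed
        then show ?thesis using lt by (intro order_tendstoD(2)) auto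
      qed
    qed
    have "\<exists>t. \<forall>i\<in>I. f i (z + t *\<^sub>R v) < \<mu>"
      using eventually_happens[OF ev] trivial_limit_at_right_real[of "0::real"]
      unfolding trivial_limit_def by blast
    then obtain t where t: "\<forall>i\<in>I. f i (z + t *\<^sub>R v) < \<mu>" by blast
    then have "F (z + t *\<^sub>R v) < \<mu>" unfolding F_def using I(1) \<open>I \<noteq> {}\<close> by simp
    then show ?thesis using gmin[of "z + t *\<^sub>R v"] \<mu>_def by simp
  qed
qed


lemma seg_len_pair: "seg_len {a,b} = dist a b"
  unfolding seg_len_def by (rule the_equality) (auto simp: doubleton_eq_iff dist_commute)

lemma local2:
  assumes "local_max_matching 2 P M" "{a,b} \<in> M" "{c,d} \<in> M" "{a,b} \<noteq> {c,d}" "a \<noteq> b" "c \<noteq> d"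
  shows "dist a c + dist b d \<le> dist a b + dist c d"
proof -
  have pm: "perfect_matching P M" and lm: "\<And>M'. M' \<subseteq> M \<Longrightarrow> card M' = 2 \<Longrightarrow> max_matching (\<Union>M') M'"
    using assms(1) unfolding local_max_matching_def by auto
  have "pairwise disjnt M" using pm unfolding perfect_matching_def by blast
  then have "disjnt {a,b} {c,d}" by (rule pairwiseD[OF _ assms(2,3,4)])
  then have dd: "a \<noteq> c" "a \<noteq> d" "b \<noteq> c" "b \<noteq> d" unfolding disjnt_def by blast+
  have c2: "card {{a,b},{c,d}} = 2" using assms(4) by simp
  have "max_matching (\<Union>{{a,b},{c,d}}) {{a,b},{c,d}}" using lm[OF _ c2] assms(2,3) by blast
  moreover have "perfect_matching (\<Union>{{a,b},{c,d}}) {{a,c},{b,d}}"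
    unfolding perfect_matching_def
  proof (intro conjI)
    show "\<forall>e\<in>{{a,c},{b,d}}. \<exists>x y. x \<noteq> y \<and> e = {x,y}" using dd by blast
    show "pairwise disjnt {{a,c},{b,d}}" using dd assms(5,6) by (simp add: pairwise_insert disjnt_def)
    show "\<Union>{{a,c},{b,d}} = \<Union>{{a,b},{c,d}}" by blast
  qed
  ultimately have "wt {{a,c},{b,d}} \<le> wt {{a,b},{c,d}}" unfolding max_matching_def by blast
  moreover have "{a,c} \<noteq> {b,d}" using dd assms(5) by (auto simp: doubleton_eq_iff)
  ultimately show ?thesis using assms(4) by (simp add: wt_def seg_len_pair)
qed

lemma sq_le_sqrt: "0 \<le> (x::real) \<Longrightarrow> 0 \<le> s \<Longrightarrow> x \<le> sqrt s \<longleftrightarrow> x^2 \<le> s"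
  by (metis real_le_rsqrt real_sqrt_le_iff real_sqrt_pow2 power_mono)

theorem theorem7:
  fixes P :: "point set" and M Mstar :: "point set set"
  assumes "finite P" and "even (card P)"
    and "local_max_matching 2 P M"
    and "max_matching P Mstar"
  shows "wt M \<ge> sqrt (3/7) * wt Mstar"
proof -
  have pm: "perfect_matching P M" using assms(3) unfolding local_max_matching_def by simp
  have pms: "perfect_matching P Mstar" using assms(4) unfolding max_matching_def by simp
  have "\<Union>M = P" using pm unfolding perfect_matching_def by simp
  then have finM: "finite M" using assms(1) finite_UnionD by blast
  have "\<forall>e\<in>M. \<exists>p. fst p \<noteq> snd p \<and> e = {fst p, snd p}"
    using pm unfolding perfect_matching_def by auto
  then have "\<exists>g. \<forall>e\<in>M. fst (g e) \<noteq> snd (g e) \<and> e = {fst (g e), snd (g e)}"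
    by (rule bchoice)
  then obtain g where g: "\<And>e. e \<in> M \<Longrightarrow> fst (g e) \<noteq> snd (g e) \<and> e = {fst (g e), snd (g e)}"
    by blast
  define ea where "ea e = fst (g e)" for e
  define eb where "eb e = snd (g e)" for e
  have E: "ea e \<noteq> eb e" "e = {ea e, eb e}" if "e \<in> M" for e
    using g[OF that] unfolding ea_def eb_def by auto
  define mid where "mid e = (1/2) *\<^sub>R (ea e + eb e)" for e
  define len where "len e = dist (ea e) (eb e)" for e
  have lenpos: "len e > 0" if "e \<in> M" for e using E[OF that] unfolding len_def by simp
  have slen: "seg_len e = len e" if "e \<in> M" for e
  proof -
    have "seg_len e = seg_len {ea e, eb e}" using E(2)[OF that] by (rule arg_cong)
    then show ?thesis unfolding len_def by (simp add: seg_len_pair)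
  qed
  have midd: "dist (mid e1) (mid e2) \<le> len e1 / 2 + len e2 / 2" if e12: "e1 \<in> M" "e2 \<in> M" for e1 e2
  proof (cases "e1 = e2")
    case True then show ?thesis using lenpos[OF e12(1)] by simp
  next
    case False
    define a b c d where "a = ea e1" "b = eb e1" "c = ea e2" "d = eb e2"
    have e1: "e1 = {a,b}" "a \<noteq> b" and e2: "e2 = {c,d}" "c \<noteq> d"
      using E[OF e12(1)] E[OF e12(2)] unfolding a_b_c_d_def by auto
    have h1: "dist a c + dist b d \<le> dist a b + dist c d"
      using local2[OF assms(3), of a b c d] e1 e2 e12 False by auto
    have h2: "dist a d + dist b c \<le> dist a b + dist d c"
      using local2[OF assms(3), of a b d c] e1 e2 e12 False by (auto simp: insert_commute)
    have v1: "mid e1 - mid e2 = (1/2) *\<^sub>R ((a - c) + (b - d))"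
      unfolding mid_def a_b_c_d_def by (simp add: algebra_simps)
    have v2: "mid e1 - mid e2 = (1/2) *\<^sub>R ((a - d) + (b - c))"
      unfolding mid_def a_b_c_d_def by (simp add: algebra_simps)
    have "2 * dist (mid e1) (mid e2) \<le> dist a c + dist b d"
      using v1 norm_triangle_ineq[of "a - c" "b - d"] by (simp add: dist_norm)
    moreover have "2 * dist (mid e1) (mid e2) \<le> dist a d + dist b c"
      using v2 norm_triangle_ineq[of "a - d" "b - c"] by (simp add: dist_norm)
    ultimately show ?thesis using h1 h2 unfolding len_def a_b_c_d_def[symmetric]
      by (simp add: dist_commute)
  qed
  define D where "D e = cball (mid e) (sqrt ((len e)^2 / 3))" for e
  have Dmem: "z \<in> D e \<longleftrightarrow> dist z (mid e)^2 \<le> (len e)^2 / 3" for z e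
    unfolding D_def by (simp add: sq_le_sqrt dist_commute)
  have tri: "\<exists>z. \<forall>e\<in>U. z \<in> D e" if U: "U \<subseteq> M" "card U \<le> 3" for U
  proof -
    have "\<exists>z. \<forall>e\<in>U. dist z (mid e)^2 \<le> 4/3 * (len e / 2)^2"
    proof (rule three_disks)
      show "finite U" using U finM finite_subset by blast
    qed (use U in \<open>auto intro!: midd lenpos\<close>)
    then show ?thesis unfolding Dmem by (simp add: power_divide)
  qed
  have dim2: "DIM(real^2) = 2" by simp
  have "\<Inter>(D ` M) \<noteq> {}"
  proof (cases "card (D ` M) \<ge> 3")
    case True
    show ?thesis
    proof (rule Helly)
      show "card (D ` M) \<ge> DIM(real^2) + 1" using True dim2 by simp
      show "\<forall>s\<in>D ` M. convex s" unfolding D_def by (simp add: convex_cball)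
      fix t assume t: "t \<subseteq> D ` M" "card t = DIM(real^2) + 1"
      have "\<exists>U. U \<subseteq> M \<and> inj_on D U \<and> t = D ` U" using subset_image_inj[of t D M] t(1) by blast
      then obtain U where U: "U \<subseteq> M" "inj_on D U" "t = D ` U" by blast
      have "card (D ` U) = card U" using U(2) by (rule card_image)
      then have "card U = 3" using t(2) U(3) dim2 by simp
      then obtain z where z: "\<forall>e\<in>U. z \<in> D e" using tri[OF U(1)] by auto
      have "z \<in> \<Inter>t" unfolding U(3) using z by blast
      then show "\<Inter>t \<noteq> {}" by blast
    qed
  next
    case False
    have "\<exists>U. U \<subseteq> M \<and> inj_on D U \<and> D ` M = D ` U" using subset_image_inj[of "D ` M" D M] by blast
    then obtain U where U: "U \<subseteq> M" "inj_on D U" "D ` M = D ` U" by blast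
    have "card (D ` U) = card U" using U(2) by (rule card_image)
    then have "card U \<le> 3" using False U(3) by simp
    then obtain z where z: "\<forall>e\<in>U. z \<in> D e" using tri[OF U(1)] by auto
    have "z \<in> \<Inter>(D ` M)" unfolding U(3) using z by blast
    then show ?thesis by blast
  qed
  then obtain z where z: "\<And>e. e \<in> M \<Longrightarrow> dist z (mid e)^2 \<le> (len e)^2 / 3"
    using Dmem by blast
  have edge: "dist (ea e) z + dist (eb e) z \<le> sqrt (7/3) * len e" if e: "e \<in> M" for e
  proof -
    define w where "w = mid e - z"
    define h where "h = (1/2) *\<^sub>R (ea e - eb e)"
    have "ea e - z = w + h" unfolding w_def h_def mid_def by (simp add: vec_eq_iff algebra_simps)
    moreover have "eb e - z = w - h" unfolding w_def h_def mid_def by (simp add: vec_eq_iff algebra_simps)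
    ultimately have "dist (ea e) z ^2 + dist (eb e) z ^2 = 2 * norm w ^2 + 2 * norm h^2"
      by (simp add: dist_norm norm_add_sq' norm_diff_sq')
    moreover have "norm h ^2 = (len e)^2 / 4" unfolding h_def len_def
      by (simp add: dist_norm power_mult_distrib power2_eq_square)
    moreover have "norm w ^2 \<le> (len e)^2 / 3" using z[OF e] unfolding w_def
      by (simp add: dist_norm norm_minus_commute)
    ultimately have s: "dist (ea e) z ^2 + dist (eb e) z ^2 \<le> 7/6 * (len e)^2" by simp
    have "(dist (ea e) z + dist (eb e) z)^2 \<le> 2 * (dist (ea e) z ^2 + dist (eb e) z ^2)"
      using zero_le_square[of "dist (ea e) z - dist (eb e) z"]
      by (simp add: power2_eq_square algebra_simps)
    also have "\<dots> \<le> 7/3 * (len e)^2" using s by simp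
    finally have "dist (ea e) z + dist (eb e) z \<le> sqrt (7/3 * (len e)^2)"
      by (simp add: sq_le_sqrt)
    also have "\<dots> = sqrt (7/3) * len e" using lenpos[OF e]
      by (simp only: real_sqrt_mult real_sqrt_abs)
    finally show ?thesis .
  qed
  have sumU: "(\<Sum>x\<in>P. dist x z) = (\<Sum>e\<in>N. \<Sum>x\<in>e. dist x z)" if N: "perfect_matching P N" for N
  proof -
    have "P = \<Union>N" using N unfolding perfect_matching_def by auto
    moreover have "(\<Sum>x\<in>\<Union>N. dist x z) = (\<Sum>e\<in>N. \<Sum>x\<in>e. dist x z)"
    proof (subst sum.Union_disjoint)
      show "\<forall>A\<in>N. finite A" using N unfolding perfect_matching_def by auto
      show "\<forall>A\<in>N. \<forall>B\<in>N. A \<noteq> B \<longrightarrow> A \<inter> B = {}"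
        using N unfolding perfect_matching_def pairwise_def disjnt_def by auto
    qed simp
    ultimately show ?thesis by simp
  qed
  have "wt Mstar \<le> (\<Sum>e\<in>Mstar. \<Sum>x\<in>e. dist x z)"
    unfolding wt_def
  proof (rule sum_mono)
    fix e assume "e \<in> Mstar"
    then obtain a b where "a \<noteq> b" "e = {a,b}" using pms unfolding perfect_matching_def by auto
    then show "seg_len e \<le> (\<Sum>x\<in>e. dist x z)"
      by (simp add: seg_len_pair dist_triangle2)
  qed
  also have "\<dots> = (\<Sum>x\<in>P. dist x z)" using sumU[OF pms] by simp
  also have "\<dots> = (\<Sum>e\<in>M. \<Sum>x\<in>e. dist x z)" using sumU[OF pm] by simp
  also have "\<dots> \<le> (\<Sum>e\<in>M. sqrt (7/3) * len e)"
  proof (rule sum_mono)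
    fix e assume e: "e \<in> M"
    have "(\<Sum>x\<in>e. dist x z) = (\<Sum>x\<in>{ea e, eb e}. dist x z)"
      using E(2)[OF e] by (rule arg_cong[where f="\<lambda>A. \<Sum>x\<in>A. dist x z"])
    also have "\<dots> = dist (ea e) z + dist (eb e) z" using E(1)[OF e] by simp
    finally have "(\<Sum>x\<in>e. dist x z) = dist (ea e) z + dist (eb e) z" .
    then show "(\<Sum>x\<in>e. dist x z) \<le> sqrt (7/3) * len e" using edge[OF e] by simp
  qed
  also have "\<dots> = sqrt (7/3) * wt M" unfolding wt_def
    by (simp add: sum_distrib_left slen)
  finally have "wt Mstar \<le> sqrt (7/3) * wt M" .
  then have "sqrt (3/7) * wt Mstar \<le> sqrt (3/7) * (sqrt (7/3) * wt M)"
    by (simp add: mult_left_mono)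
  also have "\<dots> = wt M" by (simp add: real_sqrt_mult[symmetric] mult.assoc[symmetric])
  finally show ?thesis .
qed

end
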